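(* The sets ${\sf End}$, ${\sf FP}$ and ${\sf MT}$ of twisted endofunctions, twisted parking functions and twisted packed words are symmetric suboperads of ${\sf T}\mathbb{N}$ (i.e. each contains the unit $(0)$, is closed under all partial compositions $\circ_i$, and is stable under the action of the symmetric groups). Moreover, ${\sf MT}$ is generated, as a symmetric operad, by $00$ and $01$.
   Context: Let $\mathbb{N}$ be the additive monoid of nonnegative integers. ${\sf T}\mathbb{N}=\biguplus_{n\ge1}\mathbb{N}^n$, elements of arity $n$ being words $x=(x_1,\dots,x_n)$ of length $n$ over $\mathbb{N}$ (written without separators, e.g. $01=(0,1)$), with partial compositions $x\circ_i y:=(x_1,\dots,x_{i-1},x_i+y_1,\dots,x_i+y_m,x_{i+1},\dots,x_n)$ for $x$ of arity $n$, $y$ of arity $m$, $1\le i\le n$, and right action $x\cdot\sigma:=(x_{\sigma(1)},\dots,x_{\sigma(n)})$ for $\sigma\in\mathfrak{S}_n$; this is a symmetric set-operad with unit $(0)$. A word $u$ of length $n$ is a twisted endofunction (resp. twisted parking function, twisted packed word) if the word $(u_1+1,\dots,u_n+1)$ is an endofunction (a word over $\{1,\dots,n\}$) (resp. a parking function: its nondecreasing rearrangement $v$ satisfies $v_j\le j$ for all $j$; resp. a packed word: its set of letters is $\{1,\dots,k\}$ for some $k\ge1$). ${\sf End}$, ${\sf FP}$, ${\sf MT}$ denote the sets of all twisted endofunctions, twisted parking functions and twisted packed words respectively. The symmetric suboperad generated by a set $S$ is the smallest subset containing $S$ and the unit, closed under all $\circ_i$ and the symmetric group actions. *)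

theory Defs
  imports "HOL-Combinatorics.Permutations"
begin

text \<open>Elements of T N are nonempty words over nat (lists); arity = length.\<close>

definition TN :: "nat list set" where
  "TN = {x. x \<noteq> []}"

text \<open>Partial composition x o_i y, with 1 \<le> i \<le> length x (1-based index).\<close>
definition pcomp :: "nat list \<Rightarrow> nat \<Rightarrow> nat list \<Rightarrow> nat list" where
  "pcomp x i y = take (i - 1) x @ map (\<lambda>b. x ! (i - 1) + b) y @ drop i x"

definition ract :: "nat list \<Rightarrow> (nat \<Rightarrow> nat) \<Rightarrow> nat list" where
  "ract x \<sigma> = map (\<lambda>j. x ! (\<sigma> j - 1)) [1..<length x + 1]"

definition sym_suboperad :: "nat list set \<Rightarrow> bool" where
  "sym_suboperad S \<longleftrightarrow> S \<subseteq> TN \<and> [0] \<in> S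
     \<and> (\<forall>x\<in>S. \<forall>y\<in>S. \<forall>i. 1 \<le> i \<and> i \<le> length x \<longrightarrow> pcomp x i y \<in> S)
     \<and> (\<forall>x\<in>S. \<forall>\<sigma>. \<sigma> permutes {1..length x} \<longrightarrow> ract x \<sigma> \<in> S)"

inductive_set generated :: "nat list set \<Rightarrow> nat list set" for G where
  gen: "x \<in> G \<Longrightarrow> x \<in> generated G"
| unit: "[0] \<in> generated G"
| comp: "x \<in> generated G \<Longrightarrow> y \<in> generated G \<Longrightarrow> 1 \<le> i \<Longrightarrow> i \<le> length x
          \<Longrightarrow> pcomp x i y \<in> generated G"
| act: "x \<in> generated G \<Longrightarrow> \<sigma> permutes {1..length x} \<Longrightarrow> ract x \<sigma> \<in> generated G"

definition End :: "nat list set" where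
  "End = {u. u \<noteq> [] \<and> (\<forall>a\<in>set u. 1 \<le> a + 1 \<and> a + 1 \<le> length u)}"

definition FP :: "nat list set" where
  "FP = {u. u \<noteq> [] \<and> (let v = sort (map (\<lambda>a. a + 1) u) in \<forall>j\<in>{1..length u}. v ! (j - 1) \<le> j)}"

definition MT :: "nat list set" where
  "MT = {u. u \<noteq> [] \<and> (\<exists>k\<ge>1. set (map (\<lambda>a. a + 1) u) = {1..k})}"

end

theory Submission
  imports Defs
begin


lemma map_shift_id: "map (\<lambda>j. x ! (j - 1)) [1..<length x + 1] = x"
  by (rule nth_equalityI) (auto simp del: upt_Suc)

lemma mset_ract:
  assumes "\<sigma> permutes {1..length x}"
  shows "mset (ract x \<sigma>) = mset x"
proof -
  let ?n = "length x"
  have e: "{1..<?n+1} = {1..?n}" by auto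
  have "ract x \<sigma> = map (\<lambda>j. x ! (j - 1)) (map \<sigma> [1..<?n + 1])"
    by (simp add: ract_def)
  hence "mset (ract x \<sigma>) = image_mset (\<lambda>j. x ! (j - 1)) (image_mset \<sigma> (mset_set {1..?n}))"
    by (simp only: mset_map mset_upt e)
  also have "image_mset \<sigma> (mset_set {1..?n}) = mset_set (\<sigma> ` {1..?n})"
    using assms by (simp add: image_mset_mset_set permutes_inj_on)
  also have "\<sigma> ` {1..?n} = {1..?n}" using assms by (simp add: permutes_image)
  also have "image_mset (\<lambda>j. x ! (j - 1)) (mset_set {1..?n}) = mset (map (\<lambda>j. x ! (j - 1)) [1..<?n + 1])"
    by (simp only: mset_map mset_upt e)
  also have "\<dots> = mset x" by (simp only: map_shift_id)
  finally show ?thesis .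
qed

lemma length_ract[simp]: "length (ract x \<sigma>) = length x"
  by (simp add: ract_def del: upt_Suc)

lemma ract_of_mset:
  assumes "mset y = mset x"
  shows "\<exists>\<sigma>. \<sigma> permutes {1..length x} \<and> ract x \<sigma> = y"
proof -
  obtain p where p: "p permutes {..<length x}" "permute_list p x = y"
    using mset_eq_permutation[OF assms] by blast
  let ?n = "length x"
  define \<sigma> where "\<sigma> = (\<lambda>j. if j \<in> {1..?n} then Suc (p (j - 1)) else j)"
  have img: "\<sigma> ` {1..?n} = {1..?n}"
  proof -
    have "\<sigma> ` {1..?n} = Suc ` p ` (\<lambda>j. j - 1) ` {1..?n}"
      unfolding \<sigma>_def by (auto simp: image_image)
    also have "(\<lambda>j. j - 1) ` {1..?n} = {..<?n}"
    proof -
      have "{1..?n} = Suc ` {0..<?n}" by (simp add: image_Suc_atLeastLessThan atLeastLessThanSuc_atLeastAtMost)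
      thus ?thesis by (simp add: image_image atLeast0LessThan)
    qed
    also have "p ` {..<?n} = {..<?n}" using p(1) by (simp add: permutes_image)
    also have "Suc ` {..<?n} = {1..?n}"
      by (simp add: image_Suc_atLeastLessThan flip: atLeast0LessThan) (auto)
    finally show ?thesis .
  qed
  have "inj_on \<sigma> {1..?n}"
    by (rule eq_card_imp_inj_on) (simp_all only: img finite_atLeastAtMost)
  hence "bij_betw \<sigma> {1..?n} {1..?n}" using img by (simp add: bij_betw_def)
  hence perm: "\<sigma> permutes {1..?n}"
    by (rule bij_imp_permutes) (auto simp add: \<sigma>_def)
  have "ract x \<sigma> = permute_list p x"
    unfolding ract_def permute_list_def
    by (rule nth_equalityI) (auto simp: \<sigma>_def simp del: upt_Suc)
  with perm p show ?thesis by auto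
qed

lemma gen_mset:
  assumes "x \<in> generated G" "mset y = mset x"
  shows "y \<in> generated G"
  using ract_of_mset[OF assms(2)] assms(1) generated.act by blast

lemma mset_pcomp:
  assumes "1 \<le> i" "i \<le> length x"
  shows "mset (pcomp x i y) + {#x ! (i - 1)#} = mset x + mset (map (\<lambda>b. x ! (i - 1) + b) y)"
proof -
  have "x = take (i - 1) x @ x ! (i - 1) # drop (Suc (i - 1)) x"
    using assms by (intro id_take_nth_drop) simp
  also have "Suc (i - 1) = i" using assms by simp
  finally have "mset x = mset (take (i - 1) x @ x ! (i - 1) # drop i x)" by simp
  hence "mset x = mset (take (i - 1) x) + {#x ! (i - 1)#} + mset (drop i x)"
    by simp
  thus ?thesis by (simp add: pcomp_def)
qed

lemma length_pcomp:
  assumes "1 \<le> i" "i \<le> length x"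
  shows "length (pcomp x i y) = length x + length y - 1"
  using assms by (simp add: pcomp_def)



definition C :: "nat list \<Rightarrow> nat \<Rightarrow> nat" where
  "C u k = length (filter (\<lambda>a. a < k) u)"

lemma C_mset: "C u k = size (filter_mset (\<lambda>a. a < k) (mset u))"
  unfolding C_def by (metis mset_filter size_mset)

lemma C_mono: "k \<le> k' \<Longrightarrow> C u k \<le> C u k'"
  unfolding C_def by (induction u) auto

lemma C_le: "C u k \<le> length u"
  unfolding C_def by (rule length_filter_le)

lemma sorted_count:
  assumes "sorted s"
  shows "(\<forall>j\<in>{1..length s}. s ! (j - 1) \<le> j) \<longleftrightarrow>
         (\<forall>k\<in>{1..length s}. k \<le> length (filter (\<lambda>a. a \<le> k) s))"
proof
  assume H: "\<forall>j\<in>{1..length s}. s ! (j - 1) \<le> j"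
  show "\<forall>k\<in>{1..length s}. k \<le> length (filter (\<lambda>a. a \<le> k) s)"
  proof
    fix k assume k: "k \<in> {1..length s}"
    have all: "\<forall>a\<in>set (take k s). a \<le> k"
    proof
      fix a assume "a \<in> set (take k s)"
      then obtain j where j: "j < k" "a = s ! j" using k
        by (auto simp: in_set_conv_nth)
      have "s ! j \<le> s ! (k - 1)" using assms j k by (intro sorted_nth_mono) auto
      also have "\<dots> \<le> k" using H k by auto
      finally show "a \<le> k" using j by simp
    qed
    have "length (filter (\<lambda>a. a \<le> k) s) =
          length (filter (\<lambda>a. a \<le> k) (take k s)) + length (filter (\<lambda>a. a \<le> k) (drop k s))"
      by (metis append_take_drop_id filter_append length_append)
    also have "filter (\<lambda>a. a \<le> k) (take k s) = take k s" using all by simp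
    finally show "k \<le> length (filter (\<lambda>a. a \<le> k) s)" using k by simp
  qed
next
  assume H: "\<forall>k\<in>{1..length s}. k \<le> length (filter (\<lambda>a. a \<le> k) s)"
  show "\<forall>j\<in>{1..length s}. s ! (j - 1) \<le> j"
  proof (rule ccontr)
    assume "\<not> ?thesis"
    then obtain j where j: "j \<in> {1..length s}" "s ! (j - 1) > j" by force
    have none: "\<forall>a\<in>set (drop (j - 1) s). \<not> a \<le> j"
    proof
      fix a assume "a \<in> set (drop (j - 1) s)"
      then obtain i where i: "i < length s - (j - 1)" "a = s ! (j - 1 + i)"
        by (auto simp: in_set_conv_nth)
      have "s ! (j - 1) \<le> s ! (j - 1 + i)" using assms i j by (intro sorted_nth_mono) auto
      thus "\<not> a \<le> j" using i j by simp
    qed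
    have "length (filter (\<lambda>a. a \<le> j) s) =
          length (filter (\<lambda>a. a \<le> j) (take (j - 1) s)) + length (filter (\<lambda>a. a \<le> j) (drop (j - 1) s))"
      by (metis append_take_drop_id filter_append length_append)
    also have "filter (\<lambda>a. a \<le> j) (drop (j - 1) s) = []" using none
      by (simp add: filter_empty_conv)
    also have "length (filter (\<lambda>a. a \<le> j) (take (j - 1) s)) \<le> j - 1"
      by (metis length_filter_le length_take min.bounded_iff nle_le)
    finally show False using H j by force
  qed
qed

lemma FP_iff: "u \<in> FP \<longleftrightarrow> u \<noteq> [] \<and> (\<forall>k\<in>{1..length u}. k \<le> C u k)"
proof -
  let ?v = "map (\<lambda>a. a + 1) u"
  have len: "length (sort ?v) = length u" by simp
  have "\<forall>k\<in>{1..length u}. length (filter (\<lambda>a. a \<le> k) (sort ?v)) = C u k"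
  proof
    fix k assume k: "k \<in> {1..length u}"
    have "length (filter (\<lambda>a. a \<le> k) (sort ?v)) = length (filter (\<lambda>a. a \<le> k) ?v)"
      by (metis mset_filter mset_sort size_mset)
    also have "\<dots> = length (filter ((\<lambda>a. a \<le> k) \<circ> (\<lambda>a. a + 1)) u)"
      by (simp only: filter_map length_map)
    also have "filter ((\<lambda>a. a \<le> k) \<circ> (\<lambda>a. a + 1)) u = filter (\<lambda>a. a < k) u"
      using k by (intro filter_cong) auto
    finally show "length (filter (\<lambda>a. a \<le> k) (sort ?v)) = C u k" by (simp add: C_def)
  qed
  moreover have "(\<forall>j\<in>{1..length u}. sort ?v ! (j - 1) \<le> j) \<longleftrightarrow>
         (\<forall>k\<in>{1..length u}. k \<le> length (filter (\<lambda>a. a \<le> k) (sort ?v)))"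
    using sorted_count[of "sort ?v"] len by simp
  ultimately show ?thesis unfolding FP_def Let_def by auto
qed

lemma FP_min: "u \<in> FP \<Longrightarrow> min k (length u) \<le> C u k"
proof -
  assume u: "u \<in> FP"
  show ?thesis
  proof (cases "k = 0")
    case True thus ?thesis by simp
  next
    case False
    have "min k (length u) \<le> C u (min k (length u))"
      using u False by (auto simp: FP_iff)
    also have "\<dots> \<le> C u k" by (rule C_mono) simp
    finally show ?thesis .
  qed
qed

lemma C_pcomp:
  assumes "1 \<le> i" "i \<le> length x"
  shows "C (pcomp x i y) k + (if x ! (i - 1) < k then 1 else 0) = C x k + C y (k - x ! (i - 1))"
proof -
  let ?a = "x ! (i - 1)"
  have "size (filter_mset (\<lambda>a. a < k) (mset (pcomp x i y) + {#?a#})) =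
        size (filter_mset (\<lambda>a. a < k) (mset x + mset (map (\<lambda>b. ?a + b) y)))"
    using mset_pcomp[OF assms] by simp
  hence "C (pcomp x i y) k + (if ?a < k then 1 else 0) = C x k + C (map (\<lambda>b. ?a + b) y) k"
    by (auto simp: C_mset split: if_splits)
  also have "C (map (\<lambda>b. ?a + b) y) k = C y (k - ?a)"
    unfolding C_def by (simp add: filter_map o_def) (metis less_diff_conv add.commute)
  finally show ?thesis .
qed


lemma arith_aux:
  fixes cw cx cy cxa a n m k d :: nat
  assumes "cw + (if a<k then 1 else 0) = cx + cy" "min k n \<le> cx" "min d m \<le> cy" "d = k - a"
    "min (a+1) n \<le> cxa" "a<k \<Longrightarrow> cxa \<le> cx" "a<n" "1\<le>m" "k \<le> n+m-1" "1 \<le> k"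
  shows "k \<le> cw"
  using assms by (cases "a<k"; cases "k \<le> n"; cases "d \<le> m") (simp_all add: min_def)

lemma FP_pcomp:
  assumes x: "x \<in> FP" and y: "y \<in> FP" and i: "1 \<le> i" "i \<le> length x"
  shows "pcomp x i y \<in> FP"
proof -
  let ?a = "x ! (i - 1)" and ?n = "length x" and ?m = "length y"
  have m: "?m \<ge> 1" using y by (cases y) (auto simp: FP_iff)
  have "C x ?n \<ge> ?n" using x by (auto simp: FP_iff)
  hence "\<forall>b\<in>set x. b < ?n" unfolding C_def
    by (metis length_filter_less linorder_not_less)
  hence an: "?a < ?n" using i by auto
  have len: "length (pcomp x i y) = ?n + ?m - 1" using i by (rule length_pcomp)
  show ?thesis unfolding FP_iff
  proof (intro conjI ballI)
    show "pcomp x i y \<noteq> []" using len m i by auto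
  next
    fix k assume k: "k \<in> {1..length (pcomp x i y)}"
    have e: "C (pcomp x i y) k + (if ?a < k then 1 else 0) = C x k + C y (k - ?a)"
      by (rule C_pcomp[OF i])
    have f1: "min k ?n \<le> C x k" by (rule FP_min[OF x])
    have f2: "min (k - ?a) ?m \<le> C y (k - ?a)" by (rule FP_min[OF y])
    have f3: "min (?a + 1) ?n \<le> C x (?a + 1)" by (rule FP_min[OF x])
    have f4: "?a < k \<Longrightarrow> C x (?a + 1) \<le> C x k" by (rule C_mono) simp
    show "k \<le> C (pcomp x i y) k"
      using k len by (intro arith_aux[OF e f1 f2 refl f3 f4 an m]) auto
  qed
qed



lemma set_pcomp:
  assumes "1 \<le> i" "i \<le> length x"
  shows "set (pcomp x i y) \<union> {x ! (i - 1)} = set x \<union> (\<lambda>b. x ! (i - 1) + b) ` set y"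
proof -
  have "set_mset (mset (pcomp x i y) + {#x ! (i - 1)#}) = set_mset (mset x + mset (map (\<lambda>b. x ! (i - 1) + b) y))"
    using mset_pcomp[OF assms] by simp
  thus ?thesis by simp
qed

lemma End_iff: "u \<in> End \<longleftrightarrow> u \<noteq> [] \<and> (\<forall>a\<in>set u. a < length u)"
  by (auto simp: End_def)

lemma End_pcomp:
  assumes x: "x \<in> End" and y: "y \<in> End" and i: "1 \<le> i" "i \<le> length x"
  shows "pcomp x i y \<in> End"
proof -
  let ?a = "x ! (i - 1)"
  have an: "?a < length x" using x i by (auto simp: End_iff)
  have len: "length (pcomp x i y) = length x + length y - 1" using i by (rule length_pcomp)
  have ym: "y \<noteq> []" using y by (simp add: End_iff)
  have "set (pcomp x i y) \<subseteq> set x \<union> (\<lambda>b. ?a + b) ` set y"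
    using set_pcomp[OF i, of y] by blast
  moreover have "\<forall>b\<in>set x \<union> (\<lambda>b. ?a + b) ` set y. b < length x + length y - 1"
  proof
    fix b assume b: "b \<in> set x \<union> (\<lambda>b. ?a + b) ` set y"
    have m1: "length y \<ge> 1" using ym by (cases y) auto
    show "b < length x + length y - 1"
    proof (cases "b \<in> set x")
      case True thus ?thesis using x m1 by (auto simp: End_iff)
    next
      case False
      then obtain c where c: "c \<in> set y" "b = ?a + c" using b by auto
      have "c < length y" using y c by (auto simp: End_iff)
      thus ?thesis using c an by simp
    qed
  qed
  ultimately have "\<forall>b\<in>set (pcomp x i y). b < length (pcomp x i y)" using len by auto
  moreover have "pcomp x i y \<noteq> []" using len ym i by (cases y) auto
  ultimately show ?thesis by (simp add: End_iff)
qed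

lemma MT_iff: "u \<in> MT \<longleftrightarrow> u \<noteq> [] \<and> (\<exists>k\<ge>1. set u = {0..<k})"
proof -
  have "\<And>k. set (map (\<lambda>a. a + 1) u) = {1..k} \<longleftrightarrow> set u = {0..<k}"
  proof -
    fix k
    have e: "{1..k} = Suc ` {0..<k}"
      by (simp add: image_Suc_atLeastLessThan atLeastLessThanSuc_atLeastAtMost)
    have "set (map (\<lambda>a. a + 1) u) = Suc ` set u" by simp
    thus "set (map (\<lambda>a. a + 1) u) = {1..k} \<longleftrightarrow> set u = {0..<k}"
      by (simp only: e inj_image_eq_iff[OF inj_Suc])
  qed
  thus ?thesis by (simp add: MT_def)
qed

lemma ivl_un_aux: "(a::nat) < p \<Longrightarrow> {0..<p} \<union> {a..<a+q} = {0..<max p (a+q)}"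
  by (auto simp: max_def)

lemma MT_pcomp:
  assumes x: "x \<in> MT" and y: "y \<in> MT" and i: "1 \<le> i" "i \<le> length x"
  shows "pcomp x i y \<in> MT"
proof -
  let ?a = "x ! (i - 1)"
  obtain p where p: "p \<ge> 1" "set x = {0..<p}" using x by (auto simp: MT_iff)
  obtain q where q: "q \<ge> 1" "set y = {0..<q}" using y by (auto simp: MT_iff)
  have ap: "?a \<in> set x" using i by auto
  have ym: "y \<noteq> []" using q by auto
  have len: "length (pcomp x i y) = length x + length y - 1" using i by (rule length_pcomp)
  have sh: "(\<lambda>b. ?a + b) ` {0..<q} = {?a..<?a+q}"
    by (simp add: image_add_atLeastLessThan add.commute)
  have S: "set (pcomp x i y) \<union> {?a} = {0..<p} \<union> {?a..<?a+q}"
  proof -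
    have "set (pcomp x i y) \<union> {?a} = set x \<union> (\<lambda>b. ?a + b) ` set y" by (rule set_pcomp[OF i])
    also have "\<dots> = {0..<p} \<union> {?a..<?a+q}" by (simp only: p(2) q(2) sh)
    finally show ?thesis .
  qed
  have aw: "?a \<in> set (pcomp x i y)"
  proof -
    have "?a + 0 \<in> set (map (\<lambda>b. ?a + b) y)" using q by simp
    thus ?thesis by (simp add: pcomp_def)
  qed
  have "set (pcomp x i y) = set (pcomp x i y) \<union> {?a}" using aw by blast
  also have "\<dots> = {0..<p} \<union> {?a..<?a+q}" by (rule S)
  also have "\<dots> = {0..<max p (?a+q)}" using ap p(2) by (intro ivl_un_aux) simp
  finally have "set (pcomp x i y) = {0..<max p (?a+q)}" .
  moreover have "max p (?a+q) \<ge> 1" using p by simp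
  moreover have "pcomp x i y \<noteq> []" using aw by auto
  ultimately show ?thesis unfolding MT_iff by blast
qed



lemma End_mset: "mset u = mset v \<Longrightarrow> u \<in> End \<Longrightarrow> v \<in> End"
proof -
  assume m: "mset u = mset v" and u: "u \<in> End"
  have "set u = set v" "length u = length v" using m by (auto dest: mset_eq_setD mset_eq_length)
  thus "v \<in> End" using u by (auto simp: End_iff)
qed

lemma FP_mset: "mset u = mset v \<Longrightarrow> u \<in> FP \<Longrightarrow> v \<in> FP"
  by (auto simp: FP_iff C_mset dest: mset_eq_length)

lemma MT_mset: "mset u = mset v \<Longrightarrow> u \<in> MT \<Longrightarrow> v \<in> MT"
  by (auto simp: MT_iff dest: mset_eq_setD)

lemma sym_sub_intro:
  assumes "\<And>u. u \<in> S \<Longrightarrow> u \<noteq> []" "[0] \<in> S"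
    "\<And>x y i. x \<in> S \<Longrightarrow> y \<in> S \<Longrightarrow> 1 \<le> i \<Longrightarrow> i \<le> length x \<Longrightarrow> pcomp x i y \<in> S"
    "\<And>u v. mset u = mset v \<Longrightarrow> u \<in> S \<Longrightarrow> v \<in> S"
  shows "sym_suboperad S"
  unfolding sym_suboperad_def TN_def
proof (intro conjI ballI allI impI subsetI)
  fix x \<sigma> assume "x \<in> S" "\<sigma> permutes {1..length x}"
  thus "ract x \<sigma> \<in> S" using assms(4) mset_ract by metis
qed (use assms in auto)

lemma End_ok: "sym_suboperad End"
  by (rule sym_sub_intro[OF _ _ End_pcomp End_mset]) (auto simp: End_iff intro: End_pcomp End_mset)

lemma FP_ok: "sym_suboperad FP"
  by (rule sym_sub_intro[OF _ _ FP_pcomp FP_mset]) (auto simp: FP_iff C_def intro: FP_pcomp FP_mset)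

lemma MT_ok: "sym_suboperad MT"
  by (rule sym_sub_intro[OF _ _ MT_pcomp MT_mset]) (auto simp: MT_iff intro: MT_pcomp MT_mset)

lemma gen_sub_MT: "x \<in> generated {[0,0],[0,1]} \<Longrightarrow> x \<in> MT"
proof (induction rule: generated.induct)
  case (gen x)
  have "{0..<2} = {0::nat,1}" by auto
  hence "[0,1] \<in> MT" unfolding MT_iff by (intro conjI exI[of _ 2]) auto
  moreover have "[0,0] \<in> MT" unfolding MT_iff by (intro conjI exI[of _ 1]) auto
  ultimately show ?case using gen by blast
next
  case unit show ?case unfolding MT_iff by (intro conjI exI[of _ 1]) auto
next
  case (comp x y i) thus ?case by (intro MT_pcomp) auto
next
  case (act x \<sigma>) thus ?case using MT_mset mset_ract by metis
qed

lemma MT_sub_gen: "u \<in> MT \<Longrightarrow> u \<in> generated {[0,0],[0,1]}"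
proof (induction "length u" arbitrary: u rule: less_induct)
  case less
  let ?G = "generated {[0,0],[0,1]}"
  obtain k where k: "k \<ge> 1" "set u = {0..<k}" "u \<noteq> []" using less.prems by (auto simp: MT_iff)
  show ?case
  proof (cases "length u = 1")
    case True
    then obtain c where "u = [c]" by (cases u) auto
    moreover have "0 \<in> set u" using k by auto
    ultimately have "u = [0]" by simp
    thus ?thesis by (simp add: generated.unit)
  next
    case False
    let ?b = "k - 1"
    have bu: "?b \<in> set u" using k by auto
    define u' where "u' = remove1 ?b u"
    have mu: "mset u = mset u' + {#?b#}" using bu by (simp add: u'_def)
    have lu': "length u' = length u - 1" using bu by (simp add: u'_def length_remove1)
    have ne: "u' \<noteq> []" using lu' False k(3) by (cases u) auto
    have su: "set u = set u' \<union> {?b}" using mu by (metis set_mset_mset set_mset_add_mset_insert Un_insert_right sup_bot.right_neutral set_mset_single set_mset_union)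
    show ?thesis
    proof (cases "?b \<in> set u'")
      case True
      have "set u' = {0..<k}" using su True k by auto
      hence "u' \<in> MT" using ne k by (auto simp: MT_iff)
      hence g: "u' \<in> ?G" using less.hyps lu' k by (metis diff_less length_greater_0_conv zero_less_one)
      obtain p where p: "p < length u'" "u' ! p = ?b" using True by (auto simp: in_set_conv_nth)
      have "pcomp u' (p+1) [0,0] \<in> ?G" by (rule generated.comp[OF g generated.gen]) (use p in auto)
      moreover have "mset u = mset (pcomp u' (p+1) [0,0])"
        using mset_pcomp[of "p+1" u' "[0,0]"] p mu by simp
      ultimately show ?thesis by (rule gen_mset)
    next
      case False
      have "set u' = set u - {?b}" using su False by auto
      also have "\<dots> = {0..<k} - {k - 1}" using k by simp
      also have "\<dots> = {0..<?b}" using k(1) by auto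
      finally have s': "set u' = {0..<?b}" .
      have b1: "?b \<ge> 1" using s' ne by (cases "?b") auto
      hence "u' \<in> MT" using ne s' by (auto simp: MT_iff)
      hence g: "u' \<in> ?G" using less.hyps lu' k by (metis diff_less length_greater_0_conv zero_less_one)
      have "?b - 1 \<in> set u'" using s' b1 by auto
      then obtain p where p: "p < length u'" "u' ! p = ?b - 1" by (auto simp: in_set_conv_nth)
      have "pcomp u' (p+1) [0,1] \<in> ?G" by (rule generated.comp[OF g generated.gen]) (use p in auto)
      moreover have "mset u = mset (pcomp u' (p+1) [0,1])"
        using mset_pcomp[of "p+1" u' "[0,1]"] p mu b1 by simp
      ultimately show ?thesis by (rule gen_mset)
    qed
  qed
qed

theorem mainTheorem2:
  shows "sym_suboperad End \<and> sym_suboperad FP \<and> sym_suboperad MT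
         \<and> MT = generated {[0,0], [0,1]}"
  using End_ok FP_ok MT_ok gen_sub_MT MT_sub_gen by blast

end
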